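(* Let $p>d+1$. For every function $u:\mathbb Z^d\to\mathbb R$ and every $a\in\Omega$, $$\sum_{b\in\mathbb B^d}|\nabla u(b)|^2\,\mathrm{dist}_a^{-p}(x_b,y_b)\le C(p,d)\sum_{b\in\mathbb B^d}a(b)|\nabla u(b)|^2,$$ with $C(p,d):=\sum_{x\in\mathbb Z^d}(|x|+1)^{1-p}$, whenever the sums converge (with the convention $1/\infty=0$).
   Context: $\mathbb B^d$ is the set of nearest-neighbour bonds $\{x,x+e_i\}$ of $\mathbb Z^d$; $x_b,y_b$ endpoints of $b$ with $y_b-x_b\in\{e_1,\dots,e_d\}$; $\nabla u(b)=u(y_b)-u(x_b)$. $\Omega=[0,1]^{\mathbb B^d}$. Chemical distance $\mathrm{dist}_a(x,y)=\inf\{\sum_{b\in\pi}a(b)^{-1}:\pi$ a nearest-neighbour path from $x$ to $y\}$, with $1/0=+\infty$. *)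

theory Defs
  imports "HOL-Analysis.Analysis"
begin

text \<open>Points of Z^d are vectors int^'d ('d a finite index type, d = CARD('d)).
  A bond {x, x+e_i} is encoded as the pair (x, i); so x_b = fst b, y_b = fst b + e_i.\<close>

type_synonym 'd bond = "(int ^ 'd) \<times> 'd"

definition unitv :: "'d::finite \<Rightarrow> int ^ 'd" where
  "unitv i = (\<chi> j. if j = i then 1 else 0)"

definition xb :: "'d::finite bond \<Rightarrow> int ^ 'd" where
  "xb b = fst b"

definition yb :: "'d::finite bond \<Rightarrow> int ^ 'd" where
  "yb b = fst b + unitv (snd b)"

definition grad :: "(int ^ 'd \<Rightarrow> real) \<Rightarrow> 'd::finite bond \<Rightarrow> real" where
  "grad u b = u (yb b) - u (xb b)"

definition lnorm :: "int ^ 'd::finite \<Rightarrow> real" where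
  "lnorm x = sqrt (\<Sum>i\<in>UNIV. (real_of_int (x $ i))\<^sup>2)"

definition adj :: "int ^ 'd::finite \<Rightarrow> int ^ 'd \<Rightarrow> bool" where
  "adj v w \<longleftrightarrow> (\<exists>i. w = v + unitv i \<or> v = w + unitv i)"

definition bond_of :: "int ^ 'd::finite \<Rightarrow> int ^ 'd \<Rightarrow> 'd bond" where
  "bond_of v w = (if \<exists>i. w = v + unitv i then (v, SOME i. w = v + unitv i)
                  else (w, SOME i. v = w + unitv i))"

definition nn_path :: "int ^ 'd::finite \<Rightarrow> int ^ 'd \<Rightarrow> (int ^ 'd) list \<Rightarrow> bool" where
  "nn_path x y vs \<longleftrightarrow> vs \<noteq> [] \<and> hd vs = x \<and> last vs = y \<and>
     (\<forall>k < length vs - 1. adj (vs ! k) (vs ! Suc k))"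

definition inv_cond :: "real \<Rightarrow> ennreal" where
  "inv_cond t = (if t = 0 then \<infinity> else ennreal (1 / t))"

definition path_weight :: "('d::finite bond \<Rightarrow> real) \<Rightarrow> (int ^ 'd) list \<Rightarrow> ennreal" where
  "path_weight a vs = sum_list (map (\<lambda>(v, w). inv_cond (a (bond_of v w))) (zip vs (tl vs)))"

definition chem_dist :: "('d::finite bond \<Rightarrow> real) \<Rightarrow> int ^ 'd \<Rightarrow> int ^ 'd \<Rightarrow> ennreal" where
  "chem_dist a x y = (INF vs \<in> {vs. nn_path x y vs}. path_weight a vs)"

definition chem_dist_pow :: "('d::finite bond \<Rightarrow> real) \<Rightarrow> real \<Rightarrow> int ^ 'd \<Rightarrow> int ^ 'd \<Rightarrow> real" where
  "chem_dist_pow a p x y = (if chem_dist a x y = \<infinity> then 0 else (enn2real (chem_dist a x y)) powr (- p))"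

definition Omega :: "('d::finite bond \<Rightarrow> real) set" where
  "Omega = {a. \<forall>b. 0 \<le> a b \<and> a b \<le> 1}"

definition Cpd :: "real \<Rightarrow> 'd::finite itself \<Rightarrow> real" where
  "Cpd p _ = (\<Sum>\<^sub>\<infinity>x::int ^ 'd. (lnorm x + 1) powr (1 - p))"

end

theory Submission
  imports Defs
begin

lemma summ_nat_shift:
  assumes "r > 1"
  shows "(\<lambda>n::nat. (real n + 1) powr (-r)) summable_on UNIV"
proof -
  have "summable (\<lambda>n::nat. real n powr (-r))" using assms summable_real_powr_iff by simp
  then have "summable (\<lambda>n::nat. real (Suc n) powr (-r))" using summable_Suc_iff[of "\<lambda>n. real n powr (-r)"] by simp
  then have "summable (\<lambda>n::nat. (real n + 1) powr (-r))" by (simp add: add.commute)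
  then show ?thesis by (subst summable_on_UNIV_nonneg_real_iff) auto
qed

lemma summ_h:
  assumes "r > 1"
  shows "(\<lambda>k::int. (real_of_int \<bar>k\<bar> + 1) powr (-r)) summable_on UNIV"
proof -
  let ?h = "\<lambda>k::int. (real_of_int \<bar>k\<bar> + 1) powr (-r)"
  have U: "(UNIV::int set) = range int \<union> range (\<lambda>n. - int n - 1)"
  proof (rule set_eqI)
    fix k :: int
    show "k \<in> UNIV \<longleftrightarrow> k \<in> range int \<union> range (\<lambda>n. - int n - 1)"
    proof (cases "k \<ge> 0")
      case True then show ?thesis by (auto intro!: image_eqI[of _ _ "nat k"])
    next
      case False then show ?thesis by (auto intro!: image_eqI[of _ _ "nat (-k-1)"])
    qed
  qed
  have s1: "?h summable_on range int"
    by (subst summable_on_reindex) (use summ_nat_shift[OF assms] in \<open>auto simp: o_def inj_on_def\<close>)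
  have s2: "?h summable_on range (\<lambda>n. - int n - 1)"
  proof (subst summable_on_reindex)
    show "inj_on (\<lambda>n. - int n - 1) UNIV" by (auto simp: inj_on_def)
    show "(?h \<circ> (\<lambda>n. - int n - 1)) summable_on UNIV"
    proof (rule summable_on_comparison_test[OF summ_nat_shift[OF assms]])
      fix n :: nat
      show "(?h \<circ> (\<lambda>n. - int n - 1)) n \<le> (real n + 1) powr (-r)"
        using assms by (auto intro!: powr_mono2')
      show "0 \<le> (?h \<circ> (\<lambda>n. - int n - 1)) n" by simp
    qed
  qed
  have "?h summable_on (range int \<union> range (\<lambda>n. - int n - 1))"
    by (rule summable_on_Un_disjoint[OF s1 s2]) auto
  then show ?thesis using U by simp
qed

lemma abs_le_lnorm: "real_of_int \<bar>x $ i\<bar> \<le> lnorm x"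
proof -
  have "(real_of_int (x $ i))\<^sup>2 \<le> (\<Sum>j\<in>UNIV. (real_of_int (x $ j))\<^sup>2)"
    by (rule member_le_sum) auto
  then have "sqrt ((real_of_int (x $ i))\<^sup>2) \<le> lnorm x" unfolding lnorm_def
    using real_sqrt_le_mono by blast
  then show ?thesis by simp
qed

lemma lnorm_nonneg: "lnorm x \<ge> 0" unfolding lnorm_def by (auto intro: sum_nonneg)

lemma g_le_prod:
  fixes x :: "int ^ 'd::finite"
  assumes "p > real CARD('d) + 1"
  shows "(lnorm x + 1) powr (1-p) \<le> (\<Prod>i\<in>UNIV. (real_of_int \<bar>x$i\<bar> + 1) powr (-((p-1)/CARD('d))))"
proof -
  define n where "n = CARD('d)"
  define r where "r = (p-1)/n"
  have n0: "n > 0" unfolding n_def by simp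
  have L0: "lnorm x + 1 > 0" using lnorm_nonneg[of x] by linarith
  have "(\<Prod>i\<in>UNIV. (real_of_int \<bar>x$i\<bar> + 1)) \<le> (\<Prod>i\<in>(UNIV::'d set). lnorm x + 1)"
    by (rule prod_mono) (use abs_le_lnorm[of x] in auto)
  also have "\<dots> = (lnorm x + 1) ^ n" by (simp add: n_def)
  finally have P: "(\<Prod>i\<in>UNIV. (real_of_int \<bar>x$i\<bar> + 1)) \<le> (lnorm x + 1) ^ n" .
  have P0: "(\<Prod>i\<in>UNIV. (real_of_int \<bar>x$i\<bar> + 1)) > 0" by (intro prod_pos) auto
  have "(lnorm x + 1) powr (1-p) = ((lnorm x + 1) powr n) powr (-r)"
    using n0 by (simp add: powr_powr r_def)
  also have "\<dots> = ((lnorm x + 1) ^ n) powr (-r)" using L0 by (simp add: powr_realpow)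
  also have "\<dots> \<le> (\<Prod>i\<in>UNIV. (real_of_int \<bar>x$i\<bar> + 1)) powr (-r)"
    using assms P P0 n0 by (auto intro!: powr_mono2' simp: r_def n_def)
  also have "\<dots> = (\<Prod>i\<in>UNIV. (real_of_int \<bar>x$i\<bar> + 1) powr (-r))"
    by (rule prod_powr_distrib)
  finally show ?thesis by (simp add: r_def n_def)
qed

lemma summ_g:
  assumes "p > real CARD('d::finite) + 1"
  shows "(\<lambda>x::int^'d. (lnorm x + 1) powr (1-p)) summable_on UNIV"
proof -
  define r where "r = (p-1)/CARD('d)"
  have r1: "r > 1" using assms by (simp add: r_def field_simps)
  define h where "h = (\<lambda>k::int. (real_of_int \<bar>k\<bar> + 1) powr (-r))"
  have hs: "h summable_on UNIV" unfolding h_def by (rule summ_h[OF r1])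
  define S where "S = infsum h UNIV"
  have hS: "sum h K \<le> S" if "finite K" for K
    unfolding S_def by (rule finite_sum_le_infsum[OF hs that]) (auto simp: h_def)
  have bnd: "sum (\<lambda>x::int^'d. (lnorm x + 1) powr (1-p)) F \<le> S ^ CARD('d)" if F: "finite F" for F
  proof -
    have "sum (\<lambda>x::int^'d. (lnorm x + 1) powr (1-p)) F \<le> sum (\<lambda>x. \<Prod>i\<in>UNIV. h (x$i)) F"
      by (rule sum_mono) (use g_le_prod[OF assms] in \<open>simp add: h_def r_def\<close>)
    also have "\<dots> = sum (\<lambda>g. \<Prod>i\<in>UNIV. h (g i)) (vec_nth ` F)"
      by (subst sum.reindex) (auto simp: inj_on_def vec_eq_iff o_def)
    also have "\<dots> \<le> sum (\<lambda>g. \<Prod>i\<in>UNIV. h (g i)) (PiE UNIV (\<lambda>i. (\<lambda>x. x$i) ` F))"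
      by (rule sum_mono2) (use F in \<open>auto intro!: finite_PiE prod_nonneg simp: h_def\<close>)
    also have "\<dots> = (\<Prod>i\<in>UNIV. \<Sum>k\<in>(\<lambda>x. x$i) ` F. h k)"
      by (rule prod_sum_PiE[symmetric]) (use F in auto)
    also have "\<dots> \<le> (\<Prod>i\<in>(UNIV::'d set). S)"
      by (rule prod_mono) (use F hS in \<open>auto intro: sum_nonneg simp: h_def\<close>)
    finally show ?thesis by simp
  qed
  show ?thesis
    by (rule nonneg_bdd_above_summable_on) (use bnd in \<open>auto simp: bdd_above_def intro!: exI[of _ "S ^ CARD('d)"]\<close>)
qed

fun bl :: "(int ^ 'd::finite) list \<Rightarrow> 'd bond list" where
  "bl (v # w # vs) = bond_of v w # bl (w # vs)"
| "bl _ = []"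

lemma map_zip_bl: "map (\<lambda>(v, w). F (bond_of v w)) (zip vs (tl vs)) = map F (bl vs)"
  by (induction vs rule: bl.induct) auto

lemma path_weight_bl: "path_weight a vs = sum_list (map (\<lambda>e. inv_cond (a e)) (bl vs))"
  unfolding path_weight_def using map_zip_bl[of "\<lambda>e. inv_cond (a e)" vs] by simp

lemma length_bl: "length (bl vs) = length vs - 1"
  by (induction vs rule: bl.induct) auto

lemma nn_path_iff: "nn_path x y vs \<longleftrightarrow> vs \<noteq> [] \<and> hd vs = x \<and> last vs = y \<and> successively adj vs"
  unfolding nn_path_def successively_conv_nth by auto

lemma bond_of_ends:
  assumes "adj v w"
  shows "(xb (bond_of v w) = v \<and> yb (bond_of v w) = w) \<or> (xb (bond_of v w) = w \<and> yb (bond_of v w) = v)"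
proof (cases "\<exists>i. w = v + unitv i")
  case True
  then have "w = v + unitv (SOME i. w = v + unitv i)" by (rule someI_ex)
  then show ?thesis using True by (simp add: bond_of_def xb_def yb_def)
next
  case False
  then have ex: "\<exists>i. v = w + unitv i" using assms unfolding adj_def by auto
  then have "v = w + unitv (SOME i. v = w + unitv i)" by (rule someI_ex)
  then show ?thesis using False by (simp add: bond_of_def xb_def yb_def)
qed

lemma bond_of_sum: "adj v w \<Longrightarrow> xb (bond_of v w) + yb (bond_of v w) = v + w"
  using bond_of_ends[of v w] by (auto simp: add.commute)

lemma grad_bond_of: "adj v w \<Longrightarrow> \<bar>grad u (bond_of v w)\<bar> = \<bar>u w - u v\<bar>"
  using bond_of_ends[of v w] by (auto simp: grad_def)

lemma bl_mem: "e \<in> set (bl vs) \<Longrightarrow> \<exists>ys v w zs. vs = ys @ v # w # zs \<and> e = bond_of v w"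
proof (induction vs rule: bl.induct)
  case (1 v w vs)
  show ?case
  proof (cases "e = bond_of v w")
    case True then show ?thesis by (intro exI[of _ "[]"]) auto
  next
    case False
    then have "e \<in> set (bl (w # vs))" using 1(2) by simp
    then obtain ys v' w' zs where "w # vs = ys @ v' # w' # zs" "e = bond_of v' w'" using 1(1) by blast
    then show ?thesis by (intro exI[of _ "v # ys"]) auto
  qed
qed auto

lemma bl_ends:
  assumes "successively adj vs" "e \<in> set (bl vs)"
  shows "xb e \<in> set vs \<and> yb e \<in> set vs"
proof -
  obtain ys v w zs where vs: "vs = ys @ v # w # zs" and e: "e = bond_of v w" using bl_mem[OF assms(2)] by blast
  have "adj v w" using assms(1) unfolding vs by (simp add: successively_append_iff)
  then show ?thesis using bond_of_ends[of v w] unfolding vs e by auto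
qed

lemma bl_append_sub: "set (bl zs) \<subseteq> set (bl (ys @ zs))"
proof (induction ys)
  case (Cons y ys)
  then show ?case by (cases "ys @ zs") auto
qed auto

lemma tele:
  fixes u :: "int ^ 'd::finite \<Rightarrow> real"
  shows "successively adj vs \<Longrightarrow> vs \<noteq> [] \<Longrightarrow> \<bar>u (last vs) - u (hd vs)\<bar> \<le> (\<Sum>e\<in>set (bl vs). \<bar>grad u e\<bar>)"
proof (induction "length vs" arbitrary: vs rule: less_induct)
  case less
  show ?case
  proof (cases vs)
    case Nil then show ?thesis using less by simp
  next
    case (Cons v rest)
    show ?thesis
    proof (cases rest)
      case Nil then show ?thesis using Cons by simp
    next
      case (Cons w rest')
      note vs = \<open>vs = v # rest\<close>
      show ?thesis
      proof (cases "v \<in> set rest")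
        case True
        then obtain ys zs where rs: "rest = ys @ v # zs" by (meson split_list)
        have s: "successively adj (v # zs)" using less(2) unfolding vs rs
          by (simp add: successively_append_iff successively_Cons)
        have "\<bar>u (last (v # zs)) - u (hd (v # zs))\<bar> \<le> (\<Sum>e\<in>set (bl (v # zs)). \<bar>grad u e\<bar>)"
          by (rule less(1)) (use s in \<open>auto simp: vs rs\<close>)
        also have "\<dots> \<le> (\<Sum>e\<in>set (bl vs). \<bar>grad u e\<bar>)"
          by (rule sum_mono2) (use bl_append_sub[of "v # zs" "v # ys"] in \<open>auto simp: vs rs\<close>)
        finally show ?thesis by (simp add: vs rs)
      next
        case False
        have a: "adj v w" using less(2) unfolding vs \<open>rest = w # rest'\<close> by simp
        have s: "successively adj rest" using less(2) unfolding vs by (auto simp: successively_Cons)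
        have nin: "bond_of v w \<notin> set (bl rest)"
        proof
          assume "bond_of v w \<in> set (bl rest)"
          then have "xb (bond_of v w) \<in> set rest \<and> yb (bond_of v w) \<in> set rest" using bl_ends[OF s] by blast
          then show False using bond_of_ends[OF a] False by auto
        qed
        have IH: "\<bar>u (last rest) - u (hd rest)\<bar> \<le> (\<Sum>e\<in>set (bl rest). \<bar>grad u e\<bar>)"
          by (rule less(1)) (use s in \<open>auto simp: vs \<open>rest = w # rest'\<close>\<close>)
        have "\<bar>u (last vs) - u (hd vs)\<bar> \<le> \<bar>u w - u v\<bar> + \<bar>u (last rest) - u w\<bar>"
          by (simp add: vs \<open>rest = w # rest'\<close>)
        also have "\<dots> \<le> \<bar>grad u (bond_of v w)\<bar> + (\<Sum>e\<in>set (bl rest). \<bar>grad u e\<bar>)"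
          using IH grad_bond_of[OF a, of u] by (simp add: \<open>rest = w # rest'\<close>)
        also have "\<dots> = (\<Sum>e\<in>set (bl vs). \<bar>grad u e\<bar>)"
          using nin by (simp add: vs \<open>rest = w # rest'\<close>)
        finally show ?thesis .
      qed
    qed
  qed
qed

definition l1 :: "int ^ 'd::finite \<Rightarrow> int" where
  "l1 x = (\<Sum>i\<in>UNIV. \<bar>x $ i\<bar>)"

lemma l1_add: "l1 (x + y) \<le> l1 x + l1 y"
  unfolding l1_def sum.distrib[symmetric] by (rule sum_mono) (simp add: abs_triangle_ineq)

lemma l1_unitv: "l1 (unitv i) = 1"
proof -
  have "l1 (unitv i) = (\<Sum>j\<in>UNIV. if j = i then 1 else 0)"
    unfolding l1_def unitv_def by (intro sum.cong) auto
  then show ?thesis by simp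
qed

lemma l1_uminus: "l1 (- x) = l1 x" unfolding l1_def by simp

lemma adj_l1: "adj v w \<Longrightarrow> l1 (w - v) = 1"
  unfolding adj_def
proof (elim exE disjE)
  fix i assume "w = v + unitv i" then show ?thesis by (simp add: l1_unitv)
next
  fix i assume "v = w + unitv i"
  then have "w - v = - unitv i" by simp
  then show ?thesis by (simp add: l1_unitv l1_uminus)
qed

lemma chain_l1: "successively adj vs \<Longrightarrow> vs \<noteq> [] \<Longrightarrow> l1 (last vs - hd vs) \<le> int (length vs) - 1"
proof (induction vs rule: bl.induct)
  case (1 v w vs)
  have a: "adj v w" using 1(2) by simp
  have ih: "l1 (last (w # vs) - w) \<le> int (length (w # vs)) - 1"
    using 1 by (auto simp: successively_Cons)
  have "last (v # w # vs) - hd (v # w # vs) = (last (w # vs) - w) + (w - v)" by simp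
  then have "l1 (last (v # w # vs) - hd (v # w # vs)) \<le> l1 (last (w # vs) - w) + l1 (w - v)"
    using l1_add by metis
  then show ?case using ih adj_l1[OF a] by simp
qed (auto simp: l1_def)

lemma sq_sum_le: "(\<forall>i\<in>A. (0::real) \<le> f i) \<Longrightarrow> (\<Sum>i\<in>A. (f i)\<^sup>2) \<le> (\<Sum>i\<in>A. f i)\<^sup>2"
proof (induction A rule: infinite_finite_induct)
  case (insert x F)
  have "0 \<le> sum f F" using insert by (auto intro: sum_nonneg)
  then have "(\<Sum>i\<in>insert x F. (f i)\<^sup>2) \<le> (f x)\<^sup>2 + (sum f F)\<^sup>2" using insert by auto
  also have "\<dots> \<le> (f x + sum f F)\<^sup>2" using insert \<open>0 \<le> sum f F\<close> by (simp add: power2_sum)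
  finally show ?case using insert by simp
qed auto

lemma lnorm_le_l1: "lnorm x \<le> real_of_int (l1 x)"
proof -
  have "(\<Sum>i\<in>UNIV. (real_of_int (x $ i))\<^sup>2) = (\<Sum>i\<in>UNIV. (real_of_int \<bar>x $ i\<bar>)\<^sup>2)" by simp
  also have "\<dots> \<le> (\<Sum>i\<in>UNIV. real_of_int \<bar>x $ i\<bar>)\<^sup>2" by (rule sq_sum_le) auto
  finally have "lnorm x \<le> sqrt ((\<Sum>i\<in>UNIV. real_of_int \<bar>x $ i\<bar>)\<^sup>2)" unfolding lnorm_def
    using real_sqrt_le_mono by blast
  also have "\<dots> = real_of_int (l1 x)" unfolding l1_def by (simp add: sum_nonneg)
  finally show ?thesis .
qed

lemma geom:
  assumes "successively adj vs" "vs \<noteq> []" "e \<in> set (bl vs)"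
  shows "lnorm (hd vs + last vs - (xb e + yb e)) + 1 \<le> real (length vs - 1)"
proof -
  obtain ys v w zs where vs: "vs = ys @ v # w # zs" and e: "e = bond_of v w" using bl_mem[OF assms(3)] by blast
  have s1: "successively adj (ys @ [v])" and s2: "successively adj (w # zs)" and a: "adj v w"
    using assms(1) unfolding vs by (auto simp: successively_append_iff successively_Cons)
  have h1: "hd (ys @ [v]) = hd vs" unfolding vs by (cases ys) simp_all
  have l1': "last (w # zs) = last vs" unfolding vs by simp
  have c1: "l1 (v - hd vs) \<le> int (length ys)"
    using chain_l1[OF s1] h1 by simp
  have c2: "l1 (last vs - w) \<le> int (length zs)"
    using chain_l1[OF s2] l1' by simp
  have eq: "hd vs + last vs - (xb e + yb e) = - (v - hd vs) + (last vs - w)"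
    using bond_of_sum[OF a] unfolding e by (simp add: algebra_simps)
  have "l1 (hd vs + last vs - (xb e + yb e)) \<le> l1 (- (v - hd vs)) + l1 (last vs - w)"
    unfolding eq by (rule l1_add)
  also have "\<dots> \<le> int (length ys) + int (length zs)" using c1 c2 l1_uminus[of "v - hd vs"] by linarith
  finally have "l1 (hd vs + last vs - (xb e + yb e)) \<le> int (length ys) + int (length zs)" .
  then have "lnorm (hd vs + last vs - (xb e + yb e)) \<le> real (length ys) + real (length zs)"
    using lnorm_le_l1[of "hd vs + last vs - (xb e + yb e)"] by linarith
  then show ?thesis unfolding vs by simp
qed

lemma phi_inj: "xb b + yb b = xb b' + yb b' \<Longrightarrow> b = b'"
proof -
  assume eq: "xb b + yb b = xb b' + yb b'"
  obtain x i where b: "b = (x, i)" by (cases b)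
  obtain x' i' where b': "b' = (x', i')" by (cases b')
  have c: "2 * x $ k + (if k = i then 1 else 0) = 2 * x' $ k + (if k = i' then 1 else 0)" for k
    using arg_cong[OF eq, of "\<lambda>z. z $ k"] by (simp add: b b' xb_def yb_def unitv_def)
  have "i = i'"
  proof (rule ccontr)
    assume "i \<noteq> i'"
    then have "2 * x $ i + 1 = 2 * x' $ i" using c[of i] by simp
    then show False by presburger
  qed
  then have "x $ k = x' $ k" for k using c[of k] by simp
  then have "x = x'" by (simp add: vec_eq_iff)
  then show ?thesis using \<open>i = i'\<close> b b' by simp
qed

lemma inv_ge1: "0 \<le> t \<Longrightarrow> t \<le> 1 \<Longrightarrow> 1 \<le> inv_cond t"
  by (auto simp: inv_cond_def field_simps)

lemma len_le_sum: "(\<forall>x\<in>set xs. (1::ennreal) \<le> f x) \<Longrightarrow> of_nat (length xs) \<le> sum_list (map f xs)"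
proof (induction xs)
  case (Cons x xs)
  then have "1 + of_nat (length xs) \<le> f x + sum_list (map f xs)" by (intro add_mono) auto
  then show ?case by (simp add: add.commute)
qed simp

lemma pw_ge_len:
  assumes "a \<in> Omega"
  shows "ennreal (real (length vs - 1)) \<le> path_weight a vs"
proof -
  have "of_nat (length (bl vs)) \<le> sum_list (map (\<lambda>e. inv_cond (a e)) (bl vs))"
    using assms by (intro len_le_sum) (auto simp: Omega_def intro!: inv_ge1)
  then show ?thesis by (simp add: path_weight_bl length_bl ennreal_of_nat_eq_real_of_nat)
qed

lemma list_fin:
  assumes "\<forall>e. 0 \<le> a e"
  shows "sum_list (map (\<lambda>e. inv_cond (a e)) xs) \<noteq> \<infinity> \<Longrightarrow>
    (\<forall>e\<in>set xs. 0 < a e) \<and> sum_list (map (\<lambda>e. inv_cond (a e)) xs) = ennreal (sum_list (map (\<lambda>e. 1 / a e) xs))"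
proof (induction xs)
  case (Cons x xs)
  have a: "inv_cond (a x) \<noteq> \<infinity>" and b: "sum_list (map (\<lambda>e. inv_cond (a e)) xs) \<noteq> \<infinity>"
    using Cons(2) by auto
  have ax: "a x > 0" using a assms by (metis inv_cond_def order_le_less)
  have "0 \<le> sum_list (map (\<lambda>e. 1 / a e) xs)" using assms by (intro sum_list_nonneg) auto
  then show ?case using Cons(1)[OF b] ax by (simp add: inv_cond_def)
qed simp

lemma sum_set_le_list: "(\<forall>x\<in>set xs. (0::real) \<le> f x) \<Longrightarrow> sum f (set xs) \<le> sum_list (map f xs)"
proof (induction xs)
  case (Cons x xs)
  have "sum f (set (x # xs)) \<le> f x + sum f (set xs)"
    using Cons(2) by (cases "x \<in> set xs") (auto simp: insert_absorb sum_nonneg)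
  also have "\<dots> \<le> f x + sum_list (map f xs)" using Cons by simp
  finally show ?case by simp
qed simp

lemma cs_path:
  fixes u :: "int ^ 'd::finite \<Rightarrow> real"
  assumes "successively adj vs" "vs \<noteq> []" "\<forall>e\<in>set (bl vs). a e > 0"
  shows "(u (last vs) - u (hd vs))\<^sup>2 \<le> sum_list (map (\<lambda>e. 1 / a e) (bl vs)) * (\<Sum>e\<in>set (bl vs). a e * (grad u e)\<^sup>2)"
proof -
  let ?E = "set (bl vs)"
  have t: "\<bar>u (last vs) - u (hd vs)\<bar> \<le> (\<Sum>e\<in>?E. \<bar>grad u e\<bar>)" by (rule tele[OF assms(1,2)])
  have eq: "(\<Sum>e\<in>?E. \<bar>grad u e\<bar>) = (\<Sum>e\<in>?E. sqrt (1 / a e) * (sqrt (a e) * \<bar>grad u e\<bar>))"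
  proof (rule sum.cong)
    fix e assume "e \<in> ?E"
    then have "a e > 0" using assms(3) by auto
    then have "sqrt (1 / a e) * sqrt (a e) = 1" by (simp add: real_sqrt_divide)
    then show "\<bar>grad u e\<bar> = sqrt (1 / a e) * (sqrt (a e) * \<bar>grad u e\<bar>)"
      by (metis mult.assoc mult_1)
  qed simp
  have "(u (last vs) - u (hd vs))\<^sup>2 = \<bar>u (last vs) - u (hd vs)\<bar>\<^sup>2" by simp
  also have "\<dots> \<le> (\<Sum>e\<in>?E. \<bar>grad u e\<bar>)\<^sup>2" by (rule power_mono[OF t]) simp
  also have "\<dots> \<le> (\<Sum>e\<in>?E. (sqrt (1 / a e))\<^sup>2) * (\<Sum>e\<in>?E. (sqrt (a e) * \<bar>grad u e\<bar>)\<^sup>2)"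
    unfolding eq by (rule Cauchy_Schwarz_ineq_sum)
  also have "\<dots> = (\<Sum>e\<in>?E. 1 / a e) * (\<Sum>e\<in>?E. a e * (grad u e)\<^sup>2)"
  proof -
    have "(\<Sum>e\<in>?E. (sqrt (1 / a e))\<^sup>2) = (\<Sum>e\<in>?E. 1 / a e)"
      by (rule sum.cong) (use assms(3) in auto)
    moreover have "(\<Sum>e\<in>?E. (sqrt (a e) * \<bar>grad u e\<bar>)\<^sup>2) = (\<Sum>e\<in>?E. a e * (grad u e)\<^sup>2)"
      by (rule sum.cong) (use assms(3) in \<open>auto simp: power_mult_distrib\<close>)
    ultimately show ?thesis by simp
  qed
  also have "\<dots> \<le> sum_list (map (\<lambda>e. 1 / a e) (bl vs)) * (\<Sum>e\<in>?E. a e * (grad u e)\<^sup>2)"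
  proof (rule mult_right_mono)
    show "(\<Sum>e\<in>?E. 1 / a e) \<le> sum_list (map (\<lambda>e. 1 / a e) (bl vs))"
      by (rule sum_set_le_list) (use assms(3) in \<open>auto simp: less_imp_le\<close>)
    show "0 \<le> (\<Sum>e\<in>?E. a e * (grad u e)\<^sup>2)"
      by (rule sum_nonneg) (use assms(3) in \<open>auto simp: less_imp_le\<close>)
  qed
  finally show ?thesis .
qed

lemma xb_ne_yb: "xb b \<noteq> yb b"
proof
  assume "xb b = yb b"
  then have "unitv (snd b) = (0 :: int ^ 'a)" by (simp add: xb_def yb_def)
  then have "unitv (snd b) $ snd b = (0::int)" by simp
  then show False by (simp add: unitv_def)
qed

lemma chem_ge1:
  assumes "a \<in> Omega"
  shows "1 \<le> chem_dist a (xb b) (yb b)"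
  unfolding chem_dist_def
proof (rule INF_greatest)
  fix vs assume "vs \<in> {vs. nn_path (xb b) (yb b) vs}"
  then have p: "vs \<noteq> []" "hd vs = xb b" "last vs = yb b" by (auto simp: nn_path_iff)
  have "length vs \<noteq> 1"
  proof
    assume "length vs = 1"
    then obtain v where "vs = [v]" by (cases vs) auto
    then show False using p xb_ne_yb[of b] by simp
  qed
  moreover have "length vs \<noteq> 0" using p(1) by simp
  ultimately have "length vs \<ge> 2" by linarith
  then have "ennreal 1 \<le> ennreal (real (length vs - 1))" by simp
  also have "\<dots> \<le> path_weight a vs" by (rule pw_ge_len[OF assms])
  finally show "1 \<le> path_weight a vs" by simp
qed

lemma good_path:
  assumes "chem_dist a x y \<noteq> \<infinity>" "1 \<le> chem_dist a x y" "q > 1"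
  shows "\<exists>vs. nn_path x y vs \<and> path_weight a vs < ennreal (q * enn2real (chem_dist a x y))"
proof -
  define d where "d = enn2real (chem_dist a x y)"
  have D: "chem_dist a x y = ennreal d" using assms(1) unfolding d_def by (simp add: ennreal_enn2real_if)
  have "ennreal 1 \<le> ennreal d" using assms(2) D by simp
  then have d1: "d \<ge> 1" by (auto simp: ennreal_le_iff2)
  have "chem_dist a x y < ennreal (q * d)"
    unfolding D using d1 assms(3) by (subst ennreal_less_iff) auto
  then have "(INF vs\<in>{vs. nn_path x y vs}. path_weight a vs) < ennreal (q * d)"
    by (simp add: chem_dist_def)
  then obtain vs where "nn_path x y vs" "path_weight a vs < ennreal (q * d)"
    unfolding INF_less_iff by auto
  then show ?thesis unfolding d_def by blast
qed

lemma powr_div_q: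
  fixes x q p :: real
  assumes "x > 0" "q > 0"
  shows "(x / q) powr (1 - p) = q powr (p - 1) * x powr (1 - p)"
proof -
  have "(x / q) powr (1 - p) = x powr (1 - p) / q powr (1 - p)"
    by (rule powr_divide)
  also have "1 / q powr (1 - p) = q powr (p - 1)"
    using assms by (simp add: powr_minus_divide[symmetric])
  then have "x powr (1 - p) / q powr (1 - p) = q powr (p - 1) * x powr (1 - p)"
    by (metis (no_types, lifting) divide_inverse inverse_eq_divide mult.commute)
  finally show ?thesis .
qed

lemma per_bond:
  fixes u :: "int ^ 'd::finite \<Rightarrow> real"
  assumes A: "a \<in> Omega" and p1: "p > 1" and q1: "q > 1"
  shows "\<exists>E. finite E \<and> (grad u b)\<^sup>2 * chem_dist_pow a p (xb b) (yb b)
     \<le> q powr p * (\<Sum>e\<in>E. a e * (grad u e)\<^sup>2 * (lnorm (xb b + yb b - (xb e + yb e)) + 1) powr (1 - p))"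
proof (cases "chem_dist a (xb b) (yb b) = \<infinity>")
  case True
  then show ?thesis by (intro exI[of _ "{}"]) (simp add: chem_dist_pow_def)
next
  case False
  define d where "d = enn2real (chem_dist a (xb b) (yb b))"
  have c1: "1 \<le> chem_dist a (xb b) (yb b)" by (rule chem_ge1[OF A])
  have D: "chem_dist a (xb b) (yb b) = ennreal d" using False unfolding d_def by (simp add: ennreal_enn2real_if)
  have "ennreal 1 \<le> ennreal d" using c1 D by simp
  then have d1: "d \<ge> 1" by (auto simp: ennreal_le_iff2)
  obtain vs where P: "nn_path (xb b) (yb b) vs" and pw: "path_weight a vs < ennreal (q * d)"
    using good_path[OF False c1 q1] unfolding d_def by blast
  have Pv: "vs \<noteq> []" "hd vs = xb b" "last vs = yb b" "successively adj vs"
    using P by (auto simp: nn_path_iff)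
  have a0: "\<forall>e. 0 \<le> a e" using A by (auto simp: Omega_def)
  define W where "W = sum_list (map (\<lambda>e. 1 / a e) (bl vs))"
  have pwfin: "sum_list (map (\<lambda>e. inv_cond (a e)) (bl vs)) \<noteq> \<infinity>"
    using pw unfolding path_weight_bl by auto
  note LF = list_fin[OF a0 pwfin]
  have apos: "\<forall>e\<in>set (bl vs). 0 < a e" using LF by blast
  have pwW: "path_weight a vs = ennreal W" using LF unfolding W_def path_weight_bl by blast
  have W0: "W \<ge> 0" unfolding W_def using apos by (intro sum_list_nonneg) (auto simp: less_imp_le)
  have Wq: "W < q * d" using pw W0 unfolding pwW by (simp add: ennreal_less_iff)
  have "ennreal (real (length vs - 1)) \<le> ennreal W" using pw_ge_len[OF A, of vs] pwW by simp
  then have lenW: "real (length vs - 1) \<le> W" using W0 by simp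
  define E where "E = set (bl vs)"
  define SE where "SE = (\<Sum>e\<in>E. a e * (grad u e)\<^sup>2)"
  have SE0: "SE \<ge> 0" unfolding SE_def E_def using a0 by (intro sum_nonneg) auto
  have cs: "(grad u b)\<^sup>2 \<le> W * SE"
    using cs_path[OF Pv(4) Pv(1) apos, of u] Pv unfolding W_def SE_def E_def by (simp add: grad_def)
  have cdp: "chem_dist_pow a p (xb b) (yb b) = d powr (- p)"
    using False unfolding chem_dist_pow_def d_def by simp
  have dp0: "d powr (- p) \<ge> 0" by simp
  have "(grad u b)\<^sup>2 * d powr (- p) \<le> W * SE * d powr (- p)"
    by (rule mult_right_mono[OF cs dp0])
  also have "\<dots> \<le> (q * d) * SE * d powr (- p)"
    using Wq SE0 dp0 by (intro mult_right_mono) auto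
  also have "\<dots> = q * SE * (d * d powr (- p))" by (simp add: algebra_simps)
  also have "d * d powr (- p) = d powr (1 - p)"
  proof -
    have "d powr (1 - p) = d powr 1 / d powr p" by (rule powr_diff)
    then show ?thesis using d1 by (simp add: powr_minus_divide)
  qed
  finally have step1: "(grad u b)\<^sup>2 * d powr (- p) \<le> q * SE * d powr (1 - p)" .
  have ge: "d powr (1 - p) \<le> q powr (p - 1) * (lnorm (xb b + yb b - (xb e + yb e)) + 1) powr (1 - p)"
    if e: "e \<in> E" for e
  proof -
    let ?L = "lnorm (xb b + yb b - (xb e + yb e)) + 1"
    have L0: "?L > 0" using lnorm_nonneg[of "xb b + yb b - (xb e + yb e)"] by linarith
    have "?L \<le> real (length vs - 1)" using geom[OF Pv(4) Pv(1)] e Pv unfolding E_def by simp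
    then have "?L < q * d" using lenW Wq by linarith
    then have Ld: "?L / q \<le> d" using q1 by (simp add: field_simps)
    have "d powr (1 - p) \<le> (?L / q) powr (1 - p)"
      using Ld L0 q1 p1 by (intro powr_mono2') auto
    also have "\<dots> = q powr (p - 1) * ?L powr (1 - p)" using L0 q1 by (intro powr_div_q) auto
    finally show ?thesis .
  qed
  have "q * SE * d powr (1 - p) = (\<Sum>e\<in>E. q * d powr (1 - p) * (a e * (grad u e)\<^sup>2))"
    unfolding SE_def by (simp add: sum_distrib_left algebra_simps)
  also have "\<dots> \<le> (\<Sum>e\<in>E. q * (q powr (p - 1) * (lnorm (xb b + yb b - (xb e + yb e)) + 1) powr (1 - p)) * (a e * (grad u e)\<^sup>2))"
  proof (rule sum_mono)
    fix e assume "e \<in> E"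
    show "q * d powr (1 - p) * (a e * (grad u e)\<^sup>2) \<le> q * (q powr (p - 1) * (lnorm (xb b + yb b - (xb e + yb e)) + 1) powr (1 - p)) * (a e * (grad u e)\<^sup>2)"
    proof -
      have "0 \<le> a e * (grad u e)\<^sup>2" using a0[rule_format, of e] by simp
      then show ?thesis using ge[OF \<open>e \<in> E\<close>] q1 by (intro mult_right_mono mult_left_mono) auto
    qed
  qed
  also have "\<dots> = q powr p * (\<Sum>e\<in>E. a e * (grad u e)\<^sup>2 * (lnorm (xb b + yb b - (xb e + yb e)) + 1) powr (1 - p))"
  proof -
    have "q powr (1 + (p - 1)) = q powr 1 * q powr (p - 1)" by (rule powr_add)
    then have qq: "q * q powr (p - 1) = q powr p" using q1 by simp
    have tt: "q * (q powr (p - 1) * X) * Y = q powr p * (Y * X)" for X Y :: real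
    proof -
      have "q * (q powr (p - 1) * X) * Y = (q * q powr (p - 1)) * (Y * X)" by (simp add: algebra_simps)
      then show ?thesis using qq by simp
    qed
    show ?thesis unfolding sum_distrib_left by (rule sum.cong) (simp_all only: tt)
  qed
  finally show ?thesis using step1 cdp unfolding E_def by (intro exI[of _ "set (bl vs)"]) auto
qed

lemma main_q:
  fixes p :: real and u :: "int ^ 'd::finite \<Rightarrow> real" and a :: "'d bond \<Rightarrow> real"
  assumes p: "p > real CARD('d) + 1"
    and A: "a \<in> Omega"
    and s1: "(\<lambda>b. (grad u b)\<^sup>2 * chem_dist_pow a p (xb b) (yb b)) summable_on UNIV"
    and s2: "(\<lambda>b. a b * (grad u b)\<^sup>2) summable_on UNIV"
    and q1: "q > 1"
  shows "(\<Sum>\<^sub>\<infinity>b. (grad u b)\<^sup>2 * chem_dist_pow a p (xb b) (yb b))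
           \<le> q powr p * (Cpd p TYPE('d) * (\<Sum>\<^sub>\<infinity>b. a b * (grad u b)\<^sup>2))"
proof -
  define h where "h = (\<lambda>b. (grad u b)\<^sup>2 * chem_dist_pow a p (xb b) (yb b))"
  define w where "w = (\<lambda>b. a b * (grad u b)\<^sup>2)"
  define G where "G = (\<lambda>x::int^'d. (lnorm x + 1) powr (1 - p))"
  define phi where "phi = (\<lambda>e b. xb b + yb b - (xb e + yb e :: int ^ 'd))"
  have p1: "p > 1" using p by simp
  have w0: "\<And>e. w e \<ge> 0" using A unfolding w_def Omega_def by auto
  have Gs: "G summable_on UNIV" unfolding G_def by (rule summ_g[OF p])
  have Cpd: "Cpd p TYPE('d) = infsum G UNIV" unfolding Cpd_def G_def by simp
  have C0: "Cpd p TYPE('d) \<ge> 0" unfolding Cpd by (rule infsum_nonneg) (simp add: G_def)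
  have "\<forall>b. \<exists>E. finite E \<and> h b \<le> q powr p * (\<Sum>e\<in>E. w e * G (phi e b))"
    using per_bond[OF A p1 q1, of u] unfolding h_def w_def G_def phi_def by blast
  then obtain E where E: "\<And>b. finite (E b)" "\<And>b. h b \<le> q powr p * (\<Sum>e\<in>E b. w e * G (phi e b))"
    by metis
  have bnd: "sum h F \<le> q powr p * (Cpd p TYPE('d) * infsum w UNIV)" if F: "finite F" for F
  proof -
    define U where "U = \<Union> (E ` F)"
    have U: "finite U" unfolding U_def using F E(1) by auto
    have "sum h F \<le> (\<Sum>b\<in>F. q powr p * (\<Sum>e\<in>E b. w e * G (phi e b)))"
      by (rule sum_mono) (rule E(2))
    also have "\<dots> = q powr p * (\<Sum>b\<in>F. \<Sum>e\<in>{e. e \<in> U \<and> e \<in> E b}. w e * G (phi e b))"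
    proof -
      have "\<And>b. b \<in> F \<Longrightarrow> {e. e \<in> U \<and> e \<in> E b} = E b" unfolding U_def by auto
      then show ?thesis by (simp add: sum_distrib_left)
    qed
    also have "(\<Sum>b\<in>F. \<Sum>e\<in>{e. e \<in> U \<and> e \<in> E b}. w e * G (phi e b))
        = (\<Sum>e\<in>U. \<Sum>b\<in>{b. b \<in> F \<and> e \<in> E b}. w e * G (phi e b))"
      by (rule sum.swap_restrict[OF F U])
    also have "\<dots> \<le> (\<Sum>e\<in>U. w e * Cpd p TYPE('d))"
    proof (rule sum_mono)
      fix e assume "e \<in> U"
      let ?Fe = "{b. b \<in> F \<and> e \<in> E b}"
      have inj: "inj_on (phi e) ?Fe"
        by (rule inj_onI) (use phi_inj in \<open>auto simp: phi_def\<close>)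
      have "(\<Sum>b\<in>?Fe. G (phi e b)) = (\<Sum>x\<in>phi e ` ?Fe. G x)"
        by (rule sum.reindex[OF inj, symmetric, unfolded o_def])
      also have "\<dots> \<le> infsum G UNIV"
        by (rule finite_sum_le_infsum[OF Gs]) (use F in \<open>auto simp: G_def\<close>)
      finally have "(\<Sum>b\<in>?Fe. G (phi e b)) \<le> Cpd p TYPE('d)" unfolding Cpd .
      then have "w e * (\<Sum>b\<in>?Fe. G (phi e b)) \<le> w e * Cpd p TYPE('d)"
        by (rule mult_left_mono) (rule w0)
      then show "(\<Sum>b\<in>?Fe. w e * G (phi e b)) \<le> w e * Cpd p TYPE('d)"
        by (simp add: sum_distrib_left)
    qed
    also have "\<dots> = Cpd p TYPE('d) * sum w U" by (subst sum_distrib_left) (simp add: mult.commute)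
    also have "\<dots> \<le> Cpd p TYPE('d) * infsum w UNIV"
      by (rule mult_left_mono[OF _ C0]) (rule finite_sum_le_infsum[OF s2[folded w_def] U], auto simp: w0)
    finally show ?thesis using q1 by (auto intro: mult_left_mono)
  qed
  have "infsum h UNIV \<le> q powr p * (Cpd p TYPE('d) * infsum w UNIV)"
    by (rule infsum_le_finite_sums[OF s1[folded h_def]]) (rule bnd)
  then show ?thesis unfolding h_def w_def .
qed

lemma le_from_q:
  fixes X Y p :: real
  assumes "p > 0" "Y \<ge> 0" "\<And>q. q > 1 \<Longrightarrow> X \<le> q powr p * Y"
  shows "X \<le> Y"
proof (rule ccontr)
  assume "\<not> X \<le> Y"
  then have XY: "X > Y" by simp
  show False
  proof (cases "Y = 0")
    case True
    then show False using assms(3)[of 2] XY by simp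
  next
    case False
    then have Y0: "Y > 0" using assms(2) by simp
    define t where "t = X / Y"
    have t1: "t > 1" using XY Y0 by (simp add: t_def field_simps)
    define q where "q = ((1 + t) / 2) powr (1 / p)"
    have b: "(1 + t) / 2 > 1" using t1 by simp
    have "((1 + t) / 2) powr 0 < ((1 + t) / 2) powr (1 / p)"
      by (rule powr_less_mono) (use b assms(1) in auto)
    then have q1: "q > 1" unfolding q_def using b by simp
    have "q powr p = ((1 + t) / 2) powr (1 / p * p)" unfolding q_def by (simp add: powr_powr)
    also have "\<dots> = (1 + t) / 2" using assms(1) b by simp
    finally have qp: "q powr p = (1 + t) / 2" .
    have "X \<le> (1 + t) / 2 * Y" using assms(3)[OF q1] qp by simp
    also have "\<dots> < t * Y" using t1 Y0 by (simp add: field_simps)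
    also have "\<dots> = X" using Y0 by (simp add: t_def)
    finally show False by simp
  qed
qed

theorem lemma4:
  fixes p :: real and u :: "int ^ 'd::finite \<Rightarrow> real" and a :: "'d bond \<Rightarrow> real"
  assumes "p > real CARD('d) + 1"
    and "a \<in> Omega"
    and "(\<lambda>b. (grad u b)\<^sup>2 * chem_dist_pow a p (xb b) (yb b)) summable_on UNIV"
    and "(\<lambda>b. a b * (grad u b)\<^sup>2) summable_on UNIV"
  shows "(\<Sum>\<^sub>\<infinity>b. (grad u b)\<^sup>2 * chem_dist_pow a p (xb b) (yb b))
           \<le> Cpd p TYPE('d) * (\<Sum>\<^sub>\<infinity>b. a b * (grad u b)\<^sup>2)"
proof (rule le_from_q)
  show "p > 0" using assms(1) by simp
  have C0: "Cpd p TYPE('d) \<ge> 0" unfolding Cpd_def by (rule infsum_nonneg) simp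
  have "(\<Sum>\<^sub>\<infinity>b. a b * (grad u b)\<^sup>2) \<ge> 0" using assms(2) by (intro infsum_nonneg) (auto simp: Omega_def)
  then show "Cpd p TYPE('d) * (\<Sum>\<^sub>\<infinity>b. a b * (grad u b)\<^sup>2) \<ge> 0" using C0 by simp
  fix q :: real assume "q > 1"
  then show "(\<Sum>\<^sub>\<infinity>b. (grad u b)\<^sup>2 * chem_dist_pow a p (xb b) (yb b))
           \<le> q powr p * (Cpd p TYPE('d) * (\<Sum>\<^sub>\<infinity>b. a b * (grad u b)\<^sup>2))"
    by (rule main_q[OF assms])
qed

end
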